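(* Consider an axially symmetric magnetized star and its surroundings in a steady state, described in an inertial frame with spherical polar coordinates $(r,\theta,\phi)$ (rotation axis $\theta=0$) by ideal magnetohydrodynamics, and consisting of a magnetic rotator flow region and a disk region separated by a shock boundary $\Sigma_{shock}$. Let $Q$ be any point on $\Sigma_{shock}$. Suppose that there is no meridional motion in the disk region, i.e. the disk velocity is $\hat{\mathbf{v}}=\hat v_\phi\,\mathbf e_\phi$, and that the normal component $\hat B_{n,Q}$ of the magnetic field in the disk region at $Q$ is not zero. Let $\hat Q$ be the point of the disk region adjacent to $Q$ on the magnetic field line through $Q$. Then the angular velocity of the disk region at $\hat Q$ (that is, $\hat v_\phi/(r\sin\theta)$ there) is equal to the angular velocity $\omega$ at the point $P_\star$ of the stellar photosphere at which the magnetic field line through $Q$ is anchored. Furthermore, if the system is equatorially symmetric and the magnetic field line through $Q$ is continuous across the disk, then the angular velocity at all points of the disk region along this field line is the same as that at $P_\star$, for time periods over which the disk region remains steady.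
   Context: Vectors are decomposed into meridional and azimuthal parts, $\mathbf v=\mathbf v_m+v_\phi\mathbf e_\phi$, $\mathbf B=\mathbf B_m+B_\phi\mathbf e_\phi$, where $\mathbf e_r,\mathbf e_\theta,\mathbf e_\phi$ are the unit coordinate vectors. All quantities are independent of $\phi$ (axial symmetry) and of time (steady state). In each region the material is a perfectly conducting fluid satisfying $\mathrm{div}(\rho\mathbf v)=0$, $\mathrm{div}\,\mathbf B=0$ and the steady induction equation $\mathrm{curl}(\mathbf v\times\mathbf B)=\mathbf 0$. In the flow region these imply $\mathbf v_m=\chi\mathbf B_m$ for a scalar function $\chi$ (meridional streamlines coincide with meridional field lines) and $\mathbf v=\chi\mathbf B+\omega\,r\sin\theta\,\mathbf e_\phi$, where $\omega$ is constant along each meridional field line; $\omega$ is the angular velocity of that field line, equal to the angular velocity of the star at the photospheric point $P_\star$ where the field line is anchored. Across the shock surface $\Sigma_{shock}$, with unit normal $\mathbf n$ pointing from the flow region into the disk and unit meridional tangent $\mathbf t=\mathbf n\times\mathbf e_\phi$, the jump conditions hold: the normal magnetic field is continuous, $\Delta[B_n]=0$, and the tangential electric field is continuous, $\Delta[(\mathbf v\times\mathbf B)\cdot\mathbf t]=0$, where $\Delta[\cdot]$ denotes the change across the shock and hatted quantities refer to the disk side. *)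

theory Defs
  imports "HOL-Analysis.Analysis" "HOL-Analysis.Cross3"
begin

text \<open>Meridional points are pairs (r, theta) of spherical polar coordinates;
  by axial symmetry nothing depends on phi.  An axisymmetric vector field is
  given by its components with respect to the right-handed orthonormal frame
  (e_r, e_theta, e_phi), stored as a vector of type real^3
  (index 1 = r, 2 = theta, 3 = phi).  Cross and dot products of physical
  vectors are then cross3 and the inner product of the component vectors.\<close>

type_synonym mpoint = "real \<times> real"
type_synonym vfield = "mpoint \<Rightarrow> real^3"

definition merid_domain :: "mpoint set" where
  "merid_domain = {p. 0 < fst p \<and> 0 < snd p \<and> snd p < pi}"

definition cyl_rad :: "mpoint \<Rightarrow> real" where
  "cyl_rad p = fst p * sin (snd p)"

definition e_phi :: "real^3" where
  "e_phi = vector [0, 0, 1]"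

definition d_r :: "(mpoint \<Rightarrow> real) \<Rightarrow> mpoint \<Rightarrow> real" where
  "d_r f p = deriv (\<lambda>x. f (x, snd p)) (fst p)"

definition d_th :: "(mpoint \<Rightarrow> real) \<Rightarrow> mpoint \<Rightarrow> real" where
  "d_th f p = deriv (\<lambda>y. f (fst p, y)) (snd p)"

definition div_sph :: "vfield \<Rightarrow> mpoint \<Rightarrow> real" where
  "div_sph A p =
     (1 / (fst p)\<^sup>2) * d_r (\<lambda>q. (fst q)\<^sup>2 * A q $ 1) p
   + (1 / (fst p * sin (snd p))) * d_th (\<lambda>q. sin (snd q) * A q $ 2) p"

definition curl_sph :: "vfield \<Rightarrow> vfield" where
  "curl_sph A p = vector
     [ (1 / (fst p * sin (snd p))) * d_th (\<lambda>q. sin (snd q) * A q $ 3) p,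
       - (1 / fst p) * d_r (\<lambda>q. fst q * A q $ 3) p,
       (1 / fst p) * (d_r (\<lambda>q. fst q * A q $ 2) p - d_th (\<lambda>q. A q $ 1) p) ]"

text \<open>A (segment of a) meridional field line of B lying in S: a curve
  s \<mapsto> (r(s), theta(s)), s in [a,b], whose physical tangent (r', r theta')
  is parallel to the meridional field (B_r, B_theta).\<close>
definition merid_field_line ::
    "vfield \<Rightarrow> mpoint set \<Rightarrow> (real \<Rightarrow> mpoint) \<Rightarrow> real \<Rightarrow> real \<Rightarrow> bool" where
  "merid_field_line B S c a b \<longleftrightarrow> a \<le> b \<and>
     (\<forall>s\<in>{a..b}. c s \<in> S \<and>
        (\<exists>l. (c has_vector_derivative
               (l * B (c s) $ 1, l * B (c s) $ 2 / fst (c s))) (at s within {a..b})))"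

definition ang_vel :: "vfield \<Rightarrow> mpoint \<Rightarrow> real" where
  "ang_vel v p = v p $ 3 / cyl_rad p"

definition eq_mirror :: "mpoint \<Rightarrow> mpoint" where
  "eq_mirror p = (fst p, pi - snd p)"

definition eq_symmetric ::
    "mpoint set \<Rightarrow> mpoint set \<Rightarrow> mpoint set \<Rightarrow> mpoint set
     \<Rightarrow> (mpoint \<Rightarrow> real) \<Rightarrow> vfield \<Rightarrow> bool" where
  "eq_symmetric F D Shk Sstar omega vh \<longleftrightarrow>
     eq_mirror ` F = F \<and> eq_mirror ` D = D \<and> eq_mirror ` Shk = Shk \<and>
     eq_mirror ` Sstar = Sstar \<and>
     (\<forall>p\<in>closure F. omega (eq_mirror p) = omega p) \<and>
     (\<forall>p\<in>closure D. vh (eq_mirror p) $ 3 = vh p $ 3)"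

end

theory Submission
  imports Defs
begin

lemma closure_eq_ext:
  fixes f g :: "'a::topological_space \<Rightarrow> 'b::real_normed_vector"
  assumes "continuous_on (closure S) f" "continuous_on (closure S) g"
    "\<forall>x\<in>S. f x = g x" "x \<in> closure S"
  shows "f x = g x"
proof -
  have cl: "closed {x \<in> closure S. f x - g x = 0}"
    by (intro continuous_closed_preimage_constant continuous_on_diff assms) simp
  have "S \<subseteq> {x \<in> closure S. f x - g x = 0}" using assms(3) closure_subset by auto
  hence "closure S \<subseteq> {x \<in> closure S. f x - g x = 0}" using cl closure_minimal by blast
  thus ?thesis using assms(4) by auto
qed

lemma lin2:
  fixes G :: "real \<times> real \<Rightarrow> real" and a b :: real
  assumes "(g has_derivative G) F"
  shows "G (a, b) = a * G (1,0) + b * G (0,1)"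
proof -
  have l: "linear G" using assms has_derivative_linear by blast
  have e: "(a, b) = a *\<^sub>R (1::real, 0::real) + b *\<^sub>R (0, 1)" by simp
  have "G (a, b) = G (a *\<^sub>R (1::real, 0::real)) + G (b *\<^sub>R (0, 1))"
    unfolding e by (rule linear_add[OF l])
  also have "\<dots> = a *\<^sub>R G (1, 0) + b *\<^sub>R G (0, 1)"
    by (simp only: linear_scale[OF l])
  finally show ?thesis by simp
qed

lemma part_r:
  fixes g :: "mpoint \<Rightarrow> real"
  assumes "(g has_derivative G) (at p)"
  shows "((\<lambda>x. g (x, snd p)) has_real_derivative G (1,0)) (at (fst p))"
proof -
  have "((\<lambda>x. (x, snd p)) has_derivative (\<lambda>h. (h,0))) (at (fst p))"
    by (auto intro!: derivative_eq_intros)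
  from has_derivative_compose[OF this] assms
  have "((\<lambda>x. g (x, snd p)) has_derivative (\<lambda>h. G (h,0))) (at (fst p))" by simp
  moreover have "(\<lambda>h. G (h,0)) = (*) (G (1,0))"
  proof
    fix h
    have "G (h,0) = h * G (1,0) + 0 * G (0,1)" by (rule lin2[OF assms])
    thus "G (h,0) = G (1,0) * h" by (simp only: mult.commute mult_zero_left add_0_right)
  qed
  ultimately show ?thesis by (simp add: has_field_derivative_def)
qed

lemma part_th:
  fixes g :: "mpoint \<Rightarrow> real"
  assumes "(g has_derivative G) (at p)"
  shows "((\<lambda>y. g (fst p, y)) has_real_derivative G (0,1)) (at (snd p))"
proof -
  have "((\<lambda>y. (fst p, y)) has_derivative (\<lambda>h. (0,h))) (at (snd p))"
    by (auto intro!: derivative_eq_intros)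
  from has_derivative_compose[OF this] assms
  have "((\<lambda>y. g (fst p, y)) has_derivative (\<lambda>h. G (0,h))) (at (snd p))" by simp
  moreover have "(\<lambda>h. G (0,h)) = (*) (G (0,1))"
  proof
    fix h
    have "G (0,h) = 0 * G (1,0) + h * G (0,1)" by (rule lin2[OF assms])
    thus "G (0,h) = G (0,1) * h" by (simp only: mult.commute mult_zero_left add_0_left)
  qed
  ultimately show ?thesis by (simp add: has_field_derivative_def)
qed

lemma comp_diff:
  fixes vh :: vfield
  assumes "vh differentiable (at p)"
  shows "(\<lambda>q. vh q $ k) differentiable (at p)"
proof -
  have "(\<lambda>x. x $ k) differentiable (at (vh p))"
    using bounded_linear_imp_differentiable bounded_linear_vec_nth by blast
  thus ?thesis using differentiable_chain_at[OF assms] by (simp add: o_def)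
qed

lemma ev_r:
  assumes "open D" "p \<in> D"
  shows "eventually (\<lambda>x. (x, snd p) \<in> D) (nhds (fst p))"
proof -
  have "((\<lambda>x. (x, snd p)) \<longlongrightarrow> (fst p, snd p)) (nhds (fst p))"
    by (intro tendsto_intros) (simp_all add: tendsto_ident_at filterlim_ident)
  then show ?thesis using assms by (simp add: tendsto_def)
qed

lemma ev_th:
  assumes "open D" "p \<in> D"
  shows "eventually (\<lambda>y. (fst p, y) \<in> D) (nhds (snd p))"
proof -
  have "((\<lambda>y. (fst p, y)) \<longlongrightarrow> (fst p, snd p)) (nhds (snd p))"
    by (intro tendsto_intros) (simp_all add: tendsto_ident_at filterlim_ident)
  then show ?thesis using assms by (simp add: tendsto_def)
qed

lemma cross3_comp:
  "cross3 a b $ 1 = a$2 * b$3 - a$3 * b$2"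
  "cross3 a b $ 2 = a$3 * b$1 - a$1 * b$3"
  "cross3 a b $ 3 = a$1 * b$2 - a$2 * b$1"
  by (simp_all add: cross3_def)

lemma inn3: "x \<bullet> y = x$1*y$1 + x$2*y$2 + x$3*y$3" for x y :: "real^3"
  by (simp add: inner_vec_def sum_3)
lemma ne: "n $ 3 = 0 \<Longrightarrow> cross3 n e_phi = vector [n$2, - n$1, 0]"
  by (simp add: vec_eq_iff forall_3 cross3_comp e_phi_def)
lemma crossL: assumes "v $ 1 = chi * B $ 1" "v $ 2 = chi * B $ 2" "v $ 3 = chi * B $ 3 + w"
   "n $ 3 = 0"
  shows "cross3 v B \<bullet> cross3 n e_phi = - w * (B \<bullet> n)"
  unfolding inn3 ne[OF assms(4)] vector_3 cross3_comp assms by (simp add: algebra_simps)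
lemma iso_point:
  fixes Bh vh :: vfield and D :: "mpoint set"
  assumes D: "open D" "p \<in> D" "D \<subseteq> merid_domain"
    and sm: "\<forall>p\<in>D. Bh differentiable (at p) \<and> vh differentiable (at p)"
    and dv: "div_sph Bh p = 0" and cu: "curl_sph (\<lambda>q. cross3 (vh q) (Bh q)) p = 0"
    and nm: "\<forall>p\<in>D. vh p $ 1 = 0 \<and> vh p $ 2 = 0"
  shows "\<exists>G. ((\<lambda>q. vh q $ 3 / cyl_rad q) has_derivative G) (at p) \<and>
           (\<forall>l. G (l * Bh p $ 1, l * Bh p $ 2 / fst p) = 0)"
proof -
  obtain r0 t0 where p: "p = (r0, t0)" by (cases p)
  have r0: "r0 > 0" and t0: "0 < t0" "t0 < pi" using D p by (auto simp: merid_domain_def)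
  have s0: "sin t0 > 0" using t0 sin_gt_zero by blast
  have dvh: "vh differentiable (at p)" and dBh: "Bh differentiable (at p)" using sm D by auto
  obtain GV where GV: "((\<lambda>q. vh q $ 3) has_derivative GV) (at p)"
    using comp_diff[OF dvh] differentiable_def by blast
  obtain GR where GR: "((\<lambda>q. Bh q $ 1) has_derivative GR) (at p)"
    using comp_diff[OF dBh] differentiable_def by blast
  obtain GT where GT: "((\<lambda>q. Bh q $ 2) has_derivative GT) (at p)"
    using comp_diff[OF dBh] differentiable_def by blast
  define V where "V = vh p $ 3"
  define R where "R = Bh p $ 1"
  define T where "T = Bh p $ 2"
  have dVr: "((\<lambda>x. vh (x, t0) $ 3) has_real_derivative GV (1,0)) (at r0)"
    using part_r[OF GV] p by simp
  have dVt: "((\<lambda>y. vh (r0, y) $ 3) has_real_derivative GV (0,1)) (at t0)"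
    using part_th[OF GV] p by simp
  have dRr: "((\<lambda>x. Bh (x, t0) $ 1) has_real_derivative GR (1,0)) (at r0)"
    using part_r[OF GR] p by simp
  have dTt: "((\<lambda>y. Bh (r0, y) $ 2) has_real_derivative GT (0,1)) (at t0)"
    using part_th[OF GT] p by simp
  have evr: "eventually (\<lambda>x. (x, t0) \<in> D) (nhds r0)" using ev_r[OF D(1,2)] p by simp
  have evt: "eventually (\<lambda>y. (r0, y) \<in> D) (nhds t0)" using ev_th[OF D(1,2)] p by simp
  have c1: "((\<lambda>x. x * cross3 (vh (x, t0)) (Bh (x, t0)) $ 2) has_real_derivative
      V * R + r0 * (GV (1,0) * R + V * GR (1,0))) (at r0)"
  proof (subst DERIV_cong_ev[OF refl _ refl])
    show "eventually (\<lambda>x. x * cross3 (vh (x, t0)) (Bh (x, t0)) $ 2 =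
       x * (vh (x, t0) $ 3 * Bh (x, t0) $ 1)) (nhds r0)"
      using evr by eventually_elim (use nm in \<open>auto simp: cross3_comp\<close>)
    show "((\<lambda>x. x * (vh (x, t0) $ 3 * Bh (x, t0) $ 1)) has_real_derivative
      V * R + r0 * (GV (1,0) * R + V * GR (1,0))) (at r0)"
      unfolding V_def R_def p by (auto intro!: derivative_eq_intros dVr dRr)
  qed
  have c2: "((\<lambda>y. cross3 (vh (r0, y)) (Bh (r0, y)) $ 1) has_real_derivative
      - (GV (0,1) * T + V * GT (0,1))) (at t0)"
  proof (subst DERIV_cong_ev[OF refl _ refl])
    show "eventually (\<lambda>y. cross3 (vh (r0, y)) (Bh (r0, y)) $ 1 =
       - (vh (r0, y) $ 3 * Bh (r0, y) $ 2)) (nhds t0)"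
      using evt by eventually_elim (use nm in \<open>auto simp: cross3_comp\<close>)
    show "((\<lambda>y. - (vh (r0, y) $ 3 * Bh (r0, y) $ 2)) has_real_derivative
      - (GV (0,1) * T + V * GT (0,1))) (at t0)"
      unfolding V_def T_def p by (auto intro!: derivative_eq_intros dVt dTt)
  qed
  have c3: "((\<lambda>x. x\<^sup>2 * Bh (x, t0) $ 1) has_real_derivative
      2 * r0 * R + r0\<^sup>2 * GR (1,0)) (at r0)"
    unfolding R_def p by (auto intro!: derivative_eq_intros dRr)
  have c4: "((\<lambda>y. sin y * Bh (r0, y) $ 2) has_real_derivative
      cos t0 * T + sin t0 * GT (0,1)) (at t0)"
    unfolding T_def p by (auto intro!: derivative_eq_intros dTt)
  have E1: "V * R + r0 * (GV (1,0) * R + V * GR (1,0)) = - (GV (0,1) * T + V * GT (0,1))"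
    using cu r0 DERIV_imp_deriv[OF c1] DERIV_imp_deriv[OF c2]
    by (simp add: curl_sph_def d_r_def d_th_def p vec_eq_iff forall_3)
  have E2: "(1 / r0\<^sup>2) * (2 * r0 * R + r0\<^sup>2 * GR (1,0)) + (1 / (r0 * sin t0)) * (cos t0 * T + sin t0 * GT (0,1)) = 0"
    using dv DERIV_imp_deriv[OF c3] DERIV_imp_deriv[OF c4]
    by (simp add: div_sph_def d_r_def d_th_def p)
  have dcr: "(\<lambda>q. cyl_rad q) differentiable (at p)"
  proof -
    have "((\<lambda>q. fst q * sin (snd q)) has_derivative
      (\<lambda>h. fst h * sin (snd p) + fst p * (snd h * cos (snd p)))) (at p)"
      by (auto intro!: derivative_eq_intros)
    thus ?thesis unfolding cyl_rad_def differentiable_def by blast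
  qed
  have crp: "cyl_rad p \<noteq> 0" using r0 s0 p by (simp add: cyl_rad_def)
  have "(\<lambda>q. vh q $ 3 / cyl_rad q) differentiable (at p)"
    using differentiable_divide[OF comp_diff[OF dvh] dcr crp] .
  then obtain G where G: "((\<lambda>q. vh q $ 3 / cyl_rad q) has_derivative G) (at p)"
    using differentiable_def by blast
  have o1: "((\<lambda>x. vh (x, t0) $ 3 / cyl_rad (x, t0)) has_real_derivative G (1,0)) (at r0)"
    using part_r[OF G] p by simp
  have o1': "((\<lambda>x. vh (x, t0) $ 3 / cyl_rad (x, t0)) has_real_derivative
      (GV (1,0) * (r0 * sin t0) - V * sin t0) / (r0 * sin t0)\<^sup>2) (at r0)"
    unfolding cyl_rad_def V_def p using r0 s0
    by (auto intro!: derivative_eq_intros dVr simp: power2_eq_square)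
  have o2: "((\<lambda>y. vh (r0, y) $ 3 / cyl_rad (r0, y)) has_real_derivative G (0,1)) (at t0)"
    using part_th[OF G] p by simp
  have o2': "((\<lambda>y. vh (r0, y) $ 3 / cyl_rad (r0, y)) has_real_derivative
      (GV (0,1) * (r0 * sin t0) - V * (r0 * cos t0)) / (r0 * sin t0)\<^sup>2) (at t0)"
    unfolding cyl_rad_def V_def p using r0 s0
    by (auto intro!: derivative_eq_intros dVt simp: power2_eq_square)
  have G1: "G (1,0) = (GV (1,0) * (r0 * sin t0) - V * sin t0) / (r0 * sin t0)\<^sup>2"
    using DERIV_unique[OF o1 o1'] .
  have G2: "G (0,1) = (GV (0,1) * (r0 * sin t0) - V * (r0 * cos t0)) / (r0 * sin t0)\<^sup>2"
    using DERIV_unique[OF o2 o2'] .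
  have E2': "sin t0 * (2 * R + r0 * GR (1,0)) + cos t0 * T + sin t0 * GT (0,1) = 0"
  proof -
    have "r0 * sin t0 * ((1 / r0\<^sup>2) * (2 * r0 * R + r0\<^sup>2 * GR (1,0)) + (1 / (r0 * sin t0)) * (cos t0 * T + sin t0 * GT (0,1))) = 0"
      using E2 by simp
    moreover have "r0 * sin t0 * ((1 / r0\<^sup>2) * (2 * r0 * R + r0\<^sup>2 * GR (1,0)) + (1 / (r0 * sin t0)) * (cos t0 * T + sin t0 * GT (0,1)))
      = sin t0 * (2 * R + r0 * GR (1,0)) + cos t0 * T + sin t0 * GT (0,1)"
      using r0 s0 by (simp add: field_simps power2_eq_square)
    ultimately show ?thesis by linarith
  qed
  have key: "sin t0 * (r0 * R * GV (1,0) + T * GV (0,1)) - sin t0 * R * V - T * V * cos t0 = 0"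
  proof -
    have "r0 * R * GV (1,0) + T * GV (0,1) = - V * R - r0 * V * GR (1,0) - V * GT (0,1)"
      using E1 by (simp add: algebra_simps)
    note X = this
    have "sin t0 * (r0 * R * GV (1,0) + T * GV (0,1)) - sin t0 * R * V - T * V * cos t0
        = - V * (sin t0 * (2 * R + r0 * GR (1,0)) + cos t0 * T + sin t0 * GT (0,1))"
      by (subst X) (simp add: algebra_simps)
    thus ?thesis using E2' by simp
  qed
  have "\<forall>l. G (l * R, l * T / r0) = 0"
  proof
    fix l
    have "G (l * R, l * T / r0) = l * R * G (1,0) + l * T / r0 * G (0,1)" by (rule lin2[OF G])
    also have "\<dots> = l / (r0\<^sup>2 * (sin t0)\<^sup>2) * (sin t0 * (r0 * R * GV (1,0) + T * GV (0,1)) - sin t0 * R * V - T * V * cos t0)"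
      unfolding G1 G2 using r0 s0 by (simp add: field_simps power2_eq_square)
    also have "\<dots> = 0" using key by simp
    finally show "G (l * R, l * T / r0) = 0" .
  qed
  hence G0: "\<forall>l. G (l * Bh p $ 1, l * Bh p $ 2 / fst p) = 0"
    unfolding R_def T_def using p by simp
  show ?thesis by (rule exI[of _ G], rule conjI[OF G G0])
qed

lemma der_lemma:
  fixes c :: "real \<Rightarrow> mpoint" and Om :: "mpoint \<Rightarrow> real"
  assumes l': "(c has_vector_derivative (l * B1, l * B2 / r)) (at x)"
    and G: "(Om has_derivative G) (at (c x))"
    and G0: "\<forall>l. G (l * B1, l * B2 / r) = 0"
  shows "DERIV (\<lambda>x. Om (c x)) x :> 0"
proof -
  have "((\<lambda>x. Om (c x)) has_derivative (\<lambda>h. G (h *\<^sub>R (l * B1, l * B2 / r)))) (at x)"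
    using has_derivative_compose[OF l'[unfolded has_vector_derivative_def] G] .
  moreover have "(\<lambda>h. G (h *\<^sub>R (l * B1, l * B2 / r))) = (*) 0"
  proof
    fix h
    have "h *\<^sub>R (l * B1, l * B2 / r) = ((h * l) * B1, (h * l) * B2 / r)"
      by (simp add: scaleR_Pair mult.assoc)
    hence "G (h *\<^sub>R (l * B1, l * B2 / r)) = G ((h * l) * B1, (h * l) * B2 / r)" by (rule arg_cong[where f=G])
    also have "\<dots> = 0" using G0 by blast
    finally show "G (h *\<^sub>R (l * B1, l * B2 / r)) = 0 * h" by simp
  qed
  ultimately show ?thesis by (simp add: has_field_derivative_def)
qed

lemma der_lemma2:
  fixes c :: "real \<Rightarrow> mpoint" and Om :: "mpoint \<Rightarrow> real"
  assumes l': "(c has_vector_derivative (l * B1, l * B2 / r)) (at x)"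
    and ex: "\<exists>G. (Om has_derivative G) (at (c x)) \<and> (\<forall>l. G (l * B1, l * B2 / r) = 0)"
  shows "DERIV (\<lambda>x. Om (c x)) x :> 0"
proof -
  obtain G where "(Om has_derivative G) (at (c x))" "\<forall>l. G (l * B1, l * B2 / r) = 0"
    using ex by blast
  thus ?thesis using der_lemma[OF l'] by blast
qed

theorem theorem1:
  fixes F D Shk Sstar :: "mpoint set"
    and B v Bh vh :: vfield
    and chi omega :: "mpoint \<Rightarrow> real"
    and Q Pstar :: mpoint
    and n :: "real^3"
    and c0 :: "real \<Rightarrow> mpoint" and a0 b0 :: real
  assumes regions: "open F" "open D" "F \<inter> D = {}"
      "F \<subseteq> merid_domain" "D \<subseteq> merid_domain" "Shk \<subseteq> merid_domain"
      "Shk \<subseteq> closure F \<inter> closure D" "Sstar \<subseteq> closure F"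
    and flow_cont: "continuous_on (closure F) B" "continuous_on (closure F) v"
      "continuous_on (closure F) chi" "continuous_on (closure F) omega"
    and flow_vel: "\<forall>p\<in>F. v p = chi p *\<^sub>R B p + (omega p * cyl_rad p) *\<^sub>R e_phi"
    and iso_flow: "\<forall>c a b. merid_field_line B (closure F) c a b \<longrightarrow> omega (c b) = omega (c a)"
    and disk_smooth: "\<forall>p\<in>D. Bh differentiable (at p) \<and> vh differentiable (at p)"
      "continuous_on (closure D) Bh" "continuous_on (closure D) vh"
    and disk_divB: "\<forall>p\<in>D. div_sph Bh p = 0"
    and disk_induction: "\<forall>p\<in>D. curl_sph (\<lambda>q. cross3 (vh q) (Bh q)) p = 0"
    and no_merid: "\<forall>p\<in>D. vh p $ 1 = 0 \<and> vh p $ 2 = 0"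
    and Q: "Q \<in> Shk"
    and normal: "n $ 3 = 0" "norm n = 1"
      "\<exists>\<sigma> d1 d2. \<sigma> 0 = Q \<and> \<sigma> ` {-1<..<1} \<subseteq> Shk \<and>
          (\<sigma> has_vector_derivative (d1, d2)) (at 0) \<and> (d1, d2) \<noteq> (0, 0) \<and>
          n $ 1 * d1 + n $ 2 * (fst Q * d2) = 0"
      "\<forall>\<^sub>F h in at_right 0. (fst Q + h * n $ 1, snd Q + h * n $ 2 / fst Q) \<in> D"
    and jump_Bn: "B Q \<bullet> n = Bh Q \<bullet> n"
    and jump_E: "cross3 (v Q) (B Q) \<bullet> cross3 n e_phi = cross3 (vh Q) (Bh Q) \<bullet> cross3 n e_phi"
    and Bn_nonzero: "Bh Q \<bullet> n \<noteq> 0"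
    and anchor: "Pstar \<in> Sstar" "merid_field_line B (closure F) c0 a0 b0"
      "c0 a0 = Pstar" "c0 b0 = Q"
  shows "ang_vel vh Q = omega Pstar \<and>
    (\<forall>c a b. eq_symmetric F D Shk Sstar omega vh \<and>
        merid_field_line Bh (closure D) c a b \<and> c a = Q \<and>
        (\<forall>s\<in>{a<..<b}. c s \<in> D) \<and> c b \<in> Shk
      \<longrightarrow> (\<forall>s\<in>{a..b}. ang_vel vh (c s) = omega Pstar))"
proof -
  let ?Om = "\<lambda>q. vh q $ 3 / cyl_rad q"
  have QF: "Q \<in> closure F" and QD: "Q \<in> closure D" and Qm: "Q \<in> merid_domain"
    using Q regions by auto
  have sQ: "sin (snd Q) > 0" using Qm sin_gt_zero by (auto simp: merid_domain_def)
  have crQ: "cyl_rad Q > 0" using Qm sQ by (simp add: merid_domain_def cyl_rad_def)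
  have ccr: "continuous_on A cyl_rad" for A
    unfolding cyl_rad_def by (intro continuous_intros)
  have vQ: "v Q = chi Q *\<^sub>R B Q + (omega Q * cyl_rad Q) *\<^sub>R e_phi"
    by (rule closure_eq_ext[OF flow_cont(2) continuous_on_add[OF continuous_on_scaleR[OF flow_cont(3) flow_cont(1)]
       continuous_on_scaleR[OF continuous_on_mult[OF flow_cont(4) ccr] continuous_on_const]]])
       (use flow_vel QF in auto)
  have vh1: "vh Q $ 1 = 0"
    by (rule closure_eq_ext[OF continuous_on_component[OF disk_smooth(3)] continuous_on_const])
       (use no_merid QD in auto)
  have vh2: "vh Q $ 2 = 0"
    by (rule closure_eq_ext[OF continuous_on_component[OF disk_smooth(3)] continuous_on_const])
       (use no_merid QD in auto)
  have L: "cross3 (v Q) (B Q) \<bullet> cross3 n e_phi = - (omega Q * cyl_rad Q) * (B Q \<bullet> n)"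
    by (rule crossL[where chi="chi Q"]) (simp_all add: vQ e_phi_def normal(1))
  have Rr: "cross3 (vh Q) (Bh Q) \<bullet> cross3 n e_phi = - (vh Q $ 3) * (Bh Q \<bullet> n)"
    by (rule crossL[where chi=0]) (simp_all add: vh1 vh2 normal(1))
  have "(vh Q $ 3) * (Bh Q \<bullet> n) = (omega Q * cyl_rad Q) * (Bh Q \<bullet> n)"
    using L Rr jump_E jump_Bn by simp
  hence vphi: "vh Q $ 3 = omega Q * cyl_rad Q" using Bn_nonzero by simp
  have omQ: "omega Q = omega Pstar" using iso_flow[rule_format, OF anchor(2)] anchor(3,4) by simp
  have part1: "ang_vel vh Q = omega Pstar"
    using vphi crQ omQ by (simp add: ang_vel_def)
  have part2: "\<forall>s\<in>{a..b}. ang_vel vh (c s) = omega Pstar"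
    if H: "merid_field_line Bh (closure D) c a b" "c a = Q"
        "\<forall>s\<in>{a<..<b}. c s \<in> D" "c b \<in> Shk" for c a b
  proof
    fix s assume s: "s \<in> {a..b}"
    have mf: "a \<le> b \<and> (\<forall>s\<in>{a..b}. c s \<in> closure D \<and>
        (\<exists>l. (c has_vector_derivative
               (l * Bh (c s) $ 1, l * Bh (c s) $ 2 / fst (c s))) (at s within {a..b})))"
      by (rule H(1)[unfolded merid_field_line_def])
    have cl: "\<forall>s\<in>{a..b}. c s \<in> closure D \<and>
        (\<exists>l. (c has_vector_derivative
               (l * Bh (c s) $ 1, l * Bh (c s) $ 2 / fst (c s))) (at s within {a..b}))"
      using mf by (rule conjunct2)
    have ccont: "continuous_on {a..b} c"
      unfolding continuous_on_eq_continuous_within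
    proof
      fix y assume "y \<in> {a..b}"
      then obtain l where "(c has_vector_derivative
               (l * Bh (c y) $ 1, l * Bh (c y) $ 2 / fst (c y))) (at y within {a..b})"
        using cl by blast
      thus "continuous (at y within {a..b}) c" by (rule has_vector_derivative_continuous)
    qed
    have img: "c ` {a..b} \<subseteq> closure D \<inter> merid_domain"
    proof
      fix y assume "y \<in> c ` {a..b}"
      then obtain x where x: "x \<in> {a..b}" "y = c x" by blast
      have "c x \<in> merid_domain"
      proof (cases "x = a")
        case True thus ?thesis using H(2) Q regions(6) by blast
      next
        case F1: False
        show ?thesis
        proof (cases "x = b")
          case True thus ?thesis using H(4) regions(6) by blast
        next
          case False
          hence "x \<in> {a<..<b}" using F1 x(1) by simp
          thus ?thesis using H(3) regions(5) by blast
        qed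
      qed
      moreover have "c x \<in> closure D" using cl x(1) by blast
      ultimately show "y \<in> closure D \<inter> merid_domain" using x(2) by blast
    qed
    have crpos: "cyl_rad q \<noteq> 0" if "q \<in> merid_domain" for q
    proof -
      have "sin (snd q) > 0" using that sin_gt_zero by (auto simp: merid_domain_def)
      thus ?thesis using that by (simp add: merid_domain_def cyl_rad_def)
    qed
    have c3: "continuous_on (closure D \<inter> merid_domain) (\<lambda>q. vh q $ 3)"
      by (rule continuous_on_subset[OF continuous_on_component[OF disk_smooth(3)]]) blast
    have Omc: "continuous_on (closure D \<inter> merid_domain) ?Om"
      by (rule continuous_on_divide[OF c3 ccr]) (use crpos in blast)
    have Occ: "continuous_on {a..b} (\<lambda>x. ?Om (c x))"
      using continuous_on_compose2[OF Omc ccont img] .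
    have der: "DERIV (\<lambda>x. ?Om (c x)) x :> 0" if x: "a < x" "x < b" for x
    proof -
      have xab: "x \<in> {a<..<b}" "x \<in> {a..b}" using x by simp_all
      have xD: "c x \<in> D" by (rule bspec[OF H(3) xab(1)])
      have exl: "\<exists>l. (c has_vector_derivative
               (l * Bh (c x) $ 1, l * Bh (c x) $ 2 / fst (c x))) (at x within {a..b})"
        by (rule conjunct2[OF bspec[OF cl xab(2)]])
      then obtain l where l: "(c has_vector_derivative
               (l * Bh (c x) $ 1, l * Bh (c x) $ 2 / fst (c x))) (at x within {a..b})"
        by (rule exE)
      have l': "(c has_vector_derivative
               (l * Bh (c x) $ 1, l * Bh (c x) $ 2 / fst (c x))) (at x)"
      proof -
        have "at x within {a..b} = at x" by (rule at_within_interior) (use x in simp)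
        thus ?thesis using l by simp
      qed
      have ex: "\<exists>G. (?Om has_derivative G) (at (c x)) \<and>
             (\<forall>l. G (l * Bh (c x) $ 1, l * Bh (c x) $ 2 / fst (c x)) = 0)"
        by (rule iso_point[OF regions(2) xD regions(5) disk_smooth(1)
            disk_divB[rule_format, OF xD] disk_induction[rule_format, OF xD] no_merid])
      show ?thesis by (rule der_lemma2[OF l' ex])
    qed
    show "ang_vel vh (c s) = omega Pstar"
    proof (cases "s = a")
      case True thus ?thesis using part1 H(2) by simp
    next
      case False
      hence as: "a < s" using s by auto
      have "?Om (c s) = ?Om (c a)"
      proof (rule DERIV_isconst_end[OF as continuous_on_subset[OF Occ]])
        show "{a..s} \<subseteq> {a..b}" using s by simp
        fix x assume "a < x" "x < s"
        thus "DERIV (\<lambda>x. ?Om (c x)) x :> 0" using der s by simp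
      qed
      thus ?thesis using part1 H(2) by (simp add: ang_vel_def)
    qed
  qed
  show ?thesis using part1 part2 by blast
qed

end
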